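(* Let $\mathfrak{g}=sl(n)$, $G=GL(n)$ acting by conjugation, and let $r_{BD}$ be any Belavin–Drinfeld $r$-matrix for $sl(n,\overline{\mathbb{K}})$ (with respect to the diagonal Cartan subalgebra and upper triangular Borel). Then $C(r_{BD})\subseteq\mathrm{diag}(n,\overline{\mathbb{K}})$.
   Context: $\mathbb{K}=\mathbb{C}((\hbar))$, $\overline{\mathbb{K}}$ its algebraic closure. For $sl(n)$: Cartan $\mathfrak{h}$ = traceless diagonal matrices, simple roots $\alpha_i=\epsilon_i-\epsilon_{i+1}$ ($1\le i\le n-1$), root vector $e_{\epsilon_i-\epsilon_k}=e_{ik}$ (matrix unit), $\Omega=\sum_{i,k}e_{ik}\otimes e_{ki}-\frac1nI\otimes I$ with Cartan part $\Omega_0$. An admissible triple $(\Gamma_1,\Gamma_2,\tau)$: $\Gamma_1,\Gamma_2\subset\{\alpha_1,\dots,\alpha_{n-1}\}$, $\tau:\Gamma_1\to\Gamma_2$ an isometric bijection with every $\alpha\in\Gamma_1$ having some $\tau^k(\alpha)\notin\Gamma_1$; $\tau$ extended additively. A Belavin–Drinfeld $r$-matrix is $r_{BD}=r_0+\sum_{\alpha>0}e_\alpha\otimes e_{-\alpha}+\sum_{\beta\in(\mathbb{Z}\Gamma_1)^+}\sum_{k\ge1}e_\beta\wedge e_{-\tau^k(\beta)}$ where $r_0\in\mathfrak{h}(\overline{\mathbb{K}})^{\otimes2}$, $r_0+r_0^{21}=\Omega_0$, $(\tau(\alpha)\otimes1+1\otimes\alpha)(r_0)=0$ for $\alpha\in\Gamma_1$.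 $C(r)=\{X\in GL(n,\overline{\mathbb{K}}):(\mathrm{Ad}_X\otimes\mathrm{Ad}_X)(r)=r\}$, and $\mathrm{diag}(n,\overline{\mathbb{K}})$ is the group of invertible diagonal matrices. *)

theory Defs
  imports "Jordan_Normal_Form.Matrix"
          "HOL-Computational_Algebra.Formal_Laurent_Series"
          "HOL-Algebra.Algebraic_Closure_Type"
begin

(* \<K> = \<complex>((h)), Kbar its algebraic closure *)
type_synonym kbar = "complex fls alg_closure"

(* Indices are 0-based: matrix indices 0..n-1; the simple root alpha_{i+1} of the
   paper is  sroot i  for i in {0..<n-1}.  Weights are written in epsilon-coordinates
   as functions nat => int. *)
definition eps :: "nat \<Rightarrow> nat \<Rightarrow> int" where
  "eps i = (\<lambda>m. if m = i then 1 else 0)"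

definition sroot :: "nat \<Rightarrow> nat \<Rightarrow> int" where
  "sroot i = (\<lambda>m. eps i m - eps (Suc i) m)"

definition winner :: "nat \<Rightarrow> (nat \<Rightarrow> int) \<Rightarrow> (nat \<Rightarrow> int) \<Rightarrow> int" where
  "winner n u v = (\<Sum>m<n. u m * v m)"

definition admissible :: "nat \<Rightarrow> nat set \<Rightarrow> nat set \<Rightarrow> (nat \<Rightarrow> nat) \<Rightarrow> bool" where
  "admissible n \<Gamma>1 \<Gamma>2 \<tau> \<longleftrightarrow>
     \<Gamma>1 \<subseteq> {0..<n-1} \<and> \<Gamma>2 \<subseteq> {0..<n-1} \<and> bij_betw \<tau> \<Gamma>1 \<Gamma>2 \<and>
     (\<forall>i\<in>\<Gamma>1. \<forall>j\<in>\<Gamma>1. winner n (sroot (\<tau> i)) (sroot (\<tau> j)) = winner n (sroot i) (sroot j)) \<and>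
     (\<forall>i\<in>\<Gamma>1. \<exists>k. (\<tau> ^^ k) i \<notin> \<Gamma>1)"

definition zspan :: "nat set \<Rightarrow> (nat \<Rightarrow> int) set" where
  "zspan \<Gamma>1 = {v. \<exists>c. v = (\<lambda>m. \<Sum>j\<in>\<Gamma>1. c j * sroot j m)}"

(* additive extension of tau to the Z-span of Gamma1 (well defined since simple roots
   are linearly independent) *)
definition tau_ext :: "nat set \<Rightarrow> (nat \<Rightarrow> nat) \<Rightarrow> (nat \<Rightarrow> int) \<Rightarrow> (nat \<Rightarrow> int)" where
  "tau_ext \<Gamma>1 \<tau> v = (SOME w. \<exists>c. v = (\<lambda>m. \<Sum>j\<in>\<Gamma>1. c j * sroot j m) \<and>
                                   w = (\<lambda>m. \<Sum>j\<in>\<Gamma>1. c j * sroot (\<tau> j) m))"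

definition pos_roots :: "nat \<Rightarrow> (nat \<Rightarrow> int) set" where
  "pos_roots n = {(\<lambda>m. eps i m - eps k m) | i k. i < k \<and> k < n}"

(* root vector e_gamma (a matrix unit) as an n x n array; 0 if gamma is not a root *)
definition rootvec :: "nat \<Rightarrow> (nat \<Rightarrow> int) \<Rightarrow> nat \<Rightarrow> nat \<Rightarrow> kbar" where
  "rootvec n \<gamma> = (\<lambda>a b. if a < n \<and> b < n \<and> a \<noteq> b \<and> \<gamma> = (\<lambda>m. eps a m - eps b m) then 1 else 0)"

(* elements of gl(n) \<otimes> gl(n) as 4-index arrays: T i j k l = coefficient of e_ij \<otimes> e_kl *)
type_synonym tensor = "nat \<Rightarrow> nat \<Rightarrow> nat \<Rightarrow> nat \<Rightarrow> kbar"

definition tens :: "(nat \<Rightarrow> nat \<Rightarrow> kbar) \<Rightarrow> (nat \<Rightarrow> nat \<Rightarrow> kbar) \<Rightarrow> tensor" where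
  "tens A B = (\<lambda>i j k l. A i j * B k l)"

definition wedge :: "(nat \<Rightarrow> nat \<Rightarrow> kbar) \<Rightarrow> (nat \<Rightarrow> nat \<Rightarrow> kbar) \<Rightarrow> tensor" where
  "wedge A B = (\<lambda>i j k l. tens A B i j k l - tens B A i j k l)"

(* r_0 = \<Sum>_{i,k} c i k e_ii \<otimes> e_kk, with the Belavin-Drinfeld conditions on r_0 *)
definition r0_cond :: "nat \<Rightarrow> nat set \<Rightarrow> (nat \<Rightarrow> nat) \<Rightarrow> (nat \<Rightarrow> nat \<Rightarrow> kbar) \<Rightarrow> bool" where
  "r0_cond n \<Gamma>1 \<tau> c \<longleftrightarrow>
     \<comment> \<open>r_0 lies in h \<otimes> h (h = traceless diagonal matrices)\<close>
     (\<forall>k<n. (\<Sum>i<n. c i k) = 0) \<and> (\<forall>i<n. (\<Sum>k<n. c i k) = 0) \<and>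
     \<comment> \<open>r_0 + r_0^21 = Omega_0\<close>
     (\<forall>i<n. \<forall>k<n. c i k + c k i = (if i = k then 1 else 0) - 1 / of_nat n) \<and>
     \<comment> \<open>(tau(alpha) \<otimes> 1 + 1 \<otimes> alpha)(r_0) = 0 for alpha in Gamma1\<close>
     (\<forall>j\<in>\<Gamma>1. \<forall>m<n. (\<Sum>i<n. c i m * of_int (sroot (\<tau> j) i)) + (\<Sum>k<n. c m k * of_int (sroot j k)) = 0)"

definition r0_tensor :: "nat \<Rightarrow> (nat \<Rightarrow> nat \<Rightarrow> kbar) \<Rightarrow> tensor" where
  "r0_tensor n c = (\<lambda>i j k l. if i = j \<and> k = l \<and> i < n \<and> k < n then c i k else 0)"

(* pairs (beta, k) with beta in (Z Gamma1)^+, k >= 1 and tau^k(beta) defined *)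
definition bd_pairs :: "nat \<Rightarrow> nat set \<Rightarrow> (nat \<Rightarrow> nat) \<Rightarrow> ((nat \<Rightarrow> int) \<times> nat) set" where
  "bd_pairs n \<Gamma>1 \<tau> = {(\<beta>, k). \<beta> \<in> pos_roots n \<and> \<beta> \<in> zspan \<Gamma>1 \<and> 1 \<le> k \<and>
                          (\<forall>j<k. (tau_ext \<Gamma>1 \<tau> ^^ j) \<beta> \<in> zspan \<Gamma>1)}"

definition rBD :: "nat \<Rightarrow> nat set \<Rightarrow> (nat \<Rightarrow> nat) \<Rightarrow> (nat \<Rightarrow> nat \<Rightarrow> kbar) \<Rightarrow> tensor" where
  "rBD n \<Gamma>1 \<tau> c = (\<lambda>i j k l.
      r0_tensor n c i j k l
    + (\<Sum>\<beta>\<in>pos_roots n. tens (rootvec n \<beta>) (rootvec n (\<lambda>m. - \<beta> m)) i j k l)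
    + (\<Sum>p\<in>bd_pairs n \<Gamma>1 \<tau>. wedge (rootvec n (fst p))
           (rootvec n (\<lambda>m. - ((tau_ext \<Gamma>1 \<tau> ^^ snd p) (fst p)) m)) i j k l))"

(* (Ad_X \<otimes> Ad_X) T, where Y = X^{-1} *)
definition Ad2 :: "nat \<Rightarrow> kbar mat \<Rightarrow> kbar mat \<Rightarrow> tensor \<Rightarrow> tensor" where
  "Ad2 n A B T = (\<lambda>p q s t. if p < n \<and> q < n \<and> s < n \<and> t < n then
     (\<Sum>i<n. \<Sum>j<n. \<Sum>k<n. \<Sum>l<n. A $$ (p, i) * T i j k l * B $$ (j, q) * A $$ (s, k) * B $$ (l, t))
     else 0)"

definition centralizer :: "nat \<Rightarrow> tensor \<Rightarrow> kbar mat set" where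
  "centralizer n r = {A \<in> carrier_mat n n. \<exists>B \<in> carrier_mat n n.
      A * B = 1\<^sub>m n \<and> B * A = 1\<^sub>m n \<and> Ad2 n A B r = r}"

end

theory Submission
  imports Defs
begin


definition rt :: "nat \<Rightarrow> nat \<Rightarrow> nat \<Rightarrow> int" where "rt a b = (\<lambda>m. eps a m - eps b m)"

lemma rt_app: "rt a b m = (if m = a then 1 else 0) - (if m = b then 1 else 0)"
  by (simp add: rt_def eps_def)

lemma rt_inj: assumes "a \<noteq> b" "rt a b = rt c d" "c \<noteq> d" shows "a = c \<and> b = d"
proof -
  have 1: "rt a b a = rt c d a" "rt a b b = rt c d b" using assms(2) by auto
  show ?thesis using 1 assms(1,3) by (auto simp: rt_app split: if_splits)
qed

lemma rootvec_nz: "rootvec n \<gamma> i j \<noteq> 0 \<Longrightarrow> i<n \<and> j<n \<and> i\<noteq>j \<and> \<gamma> = rt i j"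
  by (simp add: rootvec_def rt_def split: if_splits)

lemma rootvec_rt: "rootvec n (rt a b) i j = (if i<n \<and> j<n \<and> i\<noteq>j \<and> a = i \<and> b = j then 1 else 0)"
proof -
  have "i \<noteq> j \<Longrightarrow> rt a b = rt i j \<Longrightarrow> a = i \<and> b = j"
  proof -
    assume h: "i \<noteq> j" "rt a b = rt i j"
    have "a \<noteq> b"
    proof
      assume "a = b" then have "rt a b i = 0" by (simp add: rt_app)
      moreover have "rt i j i = 1" using h by (simp add: rt_app)
      ultimately show False using h by simp
    qed
    then show ?thesis using rt_inj h by blast
  qed
  then show ?thesis by (auto simp: rootvec_def rt_def[symmetric])
qed

lemma neg_rt: "(\<lambda>m. - rt a b m) = rt b a"
  by (auto simp: rt_def)

definition phi :: "nat \<Rightarrow> (nat \<Rightarrow> int) \<Rightarrow> int" where "phi n v = (\<Sum>m<n. int m * v m)"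

lemma sum_delta_lt: "a < (n::nat) \<Longrightarrow> (\<Sum>m<n. (f m :: int) * (if m = a then 1 else 0)) = f a"
  by (simp add: mult.commute[of "f _"] if_distrib cong: if_cong)

lemma phi_rt: "a < n \<Longrightarrow> b < n \<Longrightarrow> phi n (rt a b) = int a - int b"
  by (simp add: phi_def rt_app right_diff_distrib sum_subtractf sum_delta_lt)

lemma sroot_rt: "sroot j = rt j (Suc j)"
  by (simp add: sroot_def rt_def)

lemma phi_zsum: assumes "finite G" "\<forall>j\<in>G. Suc (f j) < n"
  shows "phi n (\<lambda>m. \<Sum>j\<in>G. c j * sroot (f j) m) = - (\<Sum>j\<in>G. c j)"
proof -
  have "phi n (\<lambda>m. \<Sum>j\<in>G. c j * sroot (f j) m) = (\<Sum>m<n. \<Sum>j\<in>G. int m * (c j * sroot (f j) m))"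
    by (simp add: phi_def sum_distrib_left)
  also have "\<dots> = (\<Sum>j\<in>G. c j * phi n (sroot (f j)))"
    by (subst sum.swap) (simp add: phi_def sum_distrib_left mult.left_commute)
  also have "\<dots> = (\<Sum>j\<in>G. - c j)"
    using assms(2) by (intro sum.cong) (auto simp: sroot_rt phi_rt)
  finally show ?thesis by (simp add: sum_negf)
qed

lemma pos_rt: "\<beta> \<in> pos_roots n \<Longrightarrow> \<exists>a b. a<b \<and> b<n \<and> \<beta> = rt a b"
  by (auto simp: pos_roots_def rt_def)

context
  fixes n :: nat and \<Gamma>1 :: "nat set" and \<tau> :: "nat \<Rightarrow> nat"
  assumes G1: "\<Gamma>1 \<subseteq> {0..<n-1}" and T1: "\<forall>j\<in>\<Gamma>1. \<tau> j < n-1"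
begin

lemma te_phi: assumes "v \<in> zspan \<Gamma>1" shows "phi n (tau_ext \<Gamma>1 \<tau> v) = phi n v"
proof -
  from assms obtain c where c: "v = (\<lambda>m. \<Sum>j\<in>\<Gamma>1. c j * sroot j m)" by (auto simp: zspan_def)
  have ex: "\<exists>w. \<exists>c. v = (\<lambda>m. \<Sum>j\<in>\<Gamma>1. c j * sroot j m) \<and> w = (\<lambda>m. \<Sum>j\<in>\<Gamma>1. c j * sroot (\<tau> j) m)"
    using c by blast
  have "\<exists>c. v = (\<lambda>m. \<Sum>j\<in>\<Gamma>1. c j * sroot j m) \<and> tau_ext \<Gamma>1 \<tau> v = (\<lambda>m. \<Sum>j\<in>\<Gamma>1. c j * sroot (\<tau> j) m)"
    unfolding tau_ext_def by (rule someI_ex[OF ex])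
  then obtain c' where c': "v = (\<lambda>m. \<Sum>j\<in>\<Gamma>1. c' j * sroot ((\<lambda>j. j) j) m)"
     "tau_ext \<Gamma>1 \<tau> v = (\<lambda>m. \<Sum>j\<in>\<Gamma>1. c' j * sroot (\<tau> j) m)" by auto
  have fin: "finite \<Gamma>1" using G1 finite_subset by blast
  have "phi n v = - (\<Sum>j\<in>\<Gamma>1. c' j)"
    unfolding c'(1) using G1 by (intro phi_zsum fin) auto
  moreover have "phi n (tau_ext \<Gamma>1 \<tau> v) = - (\<Sum>j\<in>\<Gamma>1. c' j)"
    unfolding c'(2) using T1 by (intro phi_zsum fin) auto
  ultimately show ?thesis by simp
qed

lemma te_iter_phi: "(\<forall>j<k. (tau_ext \<Gamma>1 \<tau> ^^ j) \<beta> \<in> zspan \<Gamma>1) \<Longrightarrow>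
   phi n ((tau_ext \<Gamma>1 \<tau> ^^ k) \<beta>) = phi n \<beta>"
proof (induction k)
  case 0 then show ?case by simp
next
  case (Suc k)
  then have "(tau_ext \<Gamma>1 \<tau> ^^ k) \<beta> \<in> zspan \<Gamma>1" by auto
  then show ?case using Suc by (simp add: te_phi)
qed

definition gam :: "(nat \<Rightarrow> int) \<times> nat \<Rightarrow> nat \<Rightarrow> int" where
  "gam p = (tau_ext \<Gamma>1 \<tau> ^^ snd p) (fst p)"

lemma F1: assumes "p \<in> bd_pairs n \<Gamma>1 \<tau>" "rootvec n (fst p) i j \<noteq> 0"
  shows "i < j \<and> fst p = rt i j"
proof -
  from rootvec_nz[OF assms(2)] have h: "i<n" "j<n" "i\<noteq>j" "fst p = rt i j" by auto
  obtain \<beta> k where pe: "p = (\<beta>, k)" by (cases p)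
  from assms(1) have "\<beta> \<in> pos_roots n" unfolding pe bd_pairs_def by simp
  then obtain a b where ab: "a<b" "b<n" "\<beta> = rt a b" using pos_rt by blast
  have "rt a b = rt i j" using ab(3) h(4) pe by simp
  then have "a = i \<and> b = j" using rt_inj[of a b i j] h(3) ab(1) by blast
  then show ?thesis using ab h by blast
qed

lemma F2: assumes "p \<in> bd_pairs n \<Gamma>1 \<tau>" "rootvec n (\<lambda>m. - gam p m) s t \<noteq> 0"
  shows "t < s \<and> gam p = rt t s"
proof -
  from rootvec_nz[OF assms(2)] have h: "s<n" "t<n" "s\<noteq>t" "(\<lambda>m. - gam p m) = rt s t" by auto
  have g: "gam p = rt t s"
  proof
    fix x
    have "- gam p x = rt s t x" using fun_cong[OF h(4), of x] by simp
    moreover have "rt t s x = - rt s t x" by (simp add: rt_app)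
    ultimately show "gam p x = rt t s x" by simp
  qed
  obtain \<beta> k where p: "p = (\<beta>, k)" by (cases p)
  from assms(1) have b: "\<beta> \<in> pos_roots n" "\<forall>j<k. (tau_ext \<Gamma>1 \<tau> ^^ j) \<beta> \<in> zspan \<Gamma>1"
    unfolding p bd_pairs_def by simp_all
  then obtain a b where ab: "a<b" "b<n" "\<beta> = rt a b" using pos_rt by blast
  have e: "phi n (gam p) = phi n \<beta>" using te_iter_phi[OF b(2)] unfolding gam_def p by simp
  have e1: "phi n (gam p) = int t - int s" unfolding g using h(2,1) by (rule phi_rt)
  have e2: "phi n \<beta> = int a - int b" unfolding ab(3) using ab by (intro phi_rt) auto
  have "t < s" using e e1 e2 ab(1) by linarith
  then show ?thesis using g by blast
qed

definition hh :: "(nat \<Rightarrow> int) \<Rightarrow> nat" where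
  "hh \<beta> = card {k. (\<beta>, k) \<in> bd_pairs n \<Gamma>1 \<tau>}"

lemma hh_le: assumes "finite (bd_pairs n \<Gamma>1 \<tau>)" shows "hh \<beta> \<le> card (bd_pairs n \<Gamma>1 \<tau>)"
proof -
  have "hh \<beta> = card ((\<lambda>k. (\<beta>, k)) ` {k. (\<beta>, k) \<in> bd_pairs n \<Gamma>1 \<tau>})"
    unfolding hh_def by (rule card_image[symmetric]) (auto simp: inj_on_def)
  also have "\<dots> \<le> card (bd_pairs n \<Gamma>1 \<tau>)" by (rule card_mono[OF assms]) auto
  finally show ?thesis .
qed

lemma F3: assumes fin: "finite (bd_pairs n \<Gamma>1 \<tau>)" and p: "p \<in> bd_pairs n \<Gamma>1 \<tau>"
  shows "hh (gam p) < hh (fst p)"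
proof -
  obtain \<beta> k where pe: "p = (\<beta>, k)" by (cases p)
  let ?te = "tau_ext \<Gamma>1 \<tau>"
  let ?B = "bd_pairs n \<Gamma>1 \<tau>"
  define \<gamma> where "\<gamma> = (?te ^^ k) \<beta>"
  have bp: "\<beta> \<in> pos_roots n" "\<beta> \<in> zspan \<Gamma>1" "1 \<le> k" "\<forall>j<k. (?te ^^ j) \<beta> \<in> zspan \<Gamma>1"
    using p pe by (auto simp: bd_pairs_def)
  let ?Kb = "{k. (\<beta>, k) \<in> ?B}"
  let ?Kg = "{k. (\<gamma>, k) \<in> ?B}"
  have finKb: "finite ?Kb"
  proof -
    have "?Kb \<subseteq> snd ` ?B" by force
    then show ?thesis using fin finite_subset by blast
  qed
  have sub: "(\<lambda>k'. k + k') ` ?Kg \<subseteq> ?Kb - {k}"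
  proof
    fix x assume "x \<in> (\<lambda>k'. k + k') ` ?Kg"
    then obtain k' where x: "x = k + k'" and k': "(\<gamma>, k') \<in> ?B" by auto
    from k' have g: "1 \<le> k'" "\<forall>j<k'. (?te ^^ j) \<gamma> \<in> zspan \<Gamma>1" by (auto simp: bd_pairs_def)
    have "\<forall>j<k+k'. (?te ^^ j) \<beta> \<in> zspan \<Gamma>1"
    proof (intro allI impI)
      fix j assume j: "j < k + k'"
      show "(?te ^^ j) \<beta> \<in> zspan \<Gamma>1"
      proof (cases "j < k")
        case True then show ?thesis using bp by auto
      next
        case False
        then have "j = (j - k) + k" by simp
        then have "(?te ^^ j) \<beta> = (?te ^^ (j - k)) \<gamma>"
          unfolding \<gamma>_def by (metis funpow_add o_apply)
        then show ?thesis using g j False by auto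
      qed
    qed
    then show "x \<in> ?Kb - {k}" using bp g x by (auto simp: bd_pairs_def)
  qed
  have "hh \<gamma> = card ((\<lambda>k'. k + k') ` ?Kg)"
    unfolding hh_def by (rule card_image[symmetric]) (auto simp: inj_on_def)
  also have "\<dots> \<le> card (?Kb - {k})" using sub finKb by (intro card_mono) auto
  also have "\<dots> < card ?Kb" using finKb p pe by (intro card_Diff1_less) auto
  finally show ?thesis by (simp add: hh_def pe gam_def \<gamma>_def)
qed

end




lemma rt_pos_iff: "i \<noteq> j \<Longrightarrow> rt i j \<in> pos_roots n \<longleftrightarrow> i < j \<and> j < n"
proof
  assume h: "i \<noteq> j" "rt i j \<in> pos_roots n"
  then obtain a b where ab: "a<b" "b<n" "rt i j = rt a b" using pos_rt by blast
  then have "i = a \<and> j = b" using rt_inj[of i j a b] h by auto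
  then show "i < j \<and> j < n" using ab by auto
next
  assume "i < j \<and> j < n" then show "rt i j \<in> pos_roots n" by (auto simp: pos_roots_def rt_def)
qed

lemma finite_pos: "finite (pos_roots n)"
proof -
  have "pos_roots n \<subseteq> (\<lambda>(a,b). rt a b) ` ({..<n} \<times> {..<n})" by (force simp: pos_roots_def rt_def)
  then show ?thesis by (rule finite_subset) auto
qed

lemma rootvec_eq: "rootvec n \<beta> i j = (if \<beta> = rt i j then (if i<n \<and> j<n \<and> i\<noteq>j then 1 else 0) else 0)"
  by (auto simp: rootvec_def rt_def)

lemma U_point: assumes "s < n" "t < n"
  shows "(\<Sum>\<beta>\<in>pos_roots n. tens (rootvec n \<beta>) (rootvec n (\<lambda>m. - \<beta> m)) i j s t)
     = (if i = t \<and> j = s \<and> t < s then 1 else 0)"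
proof -
  have "(\<Sum>\<beta>\<in>pos_roots n. tens (rootvec n \<beta>) (rootvec n (\<lambda>m. - \<beta> m)) i j s t)
     = (\<Sum>\<beta>\<in>pos_roots n. if \<beta> = rt i j then (if i<n \<and> j<n \<and> i\<noteq>j then rootvec n (\<lambda>m. - rt i j m) s t else 0) else 0)"
    by (intro sum.cong) (auto simp: tens_def rootvec_eq[of n _ i j])
  also have "\<dots> = (if rt i j \<in> pos_roots n then (if i<n \<and> j<n \<and> i\<noteq>j then rootvec n (\<lambda>m. - rt i j m) s t else 0) else 0)"
    using finite_pos by (simp only: sum.delta)
  also have "\<dots> = (if i = t \<and> j = s \<and> t < s then 1 else 0)"
    using assms by (auto simp: neg_rt rootvec_rt rt_pos_iff)
  finally show ?thesis .
qed

lemma sum_delta_mult: "finite A \<Longrightarrow> (\<Sum>j\<in>A. (if j = s then 1 else 0) * (f j :: 'a :: semiring_1)) = (if s \<in> A then f s else 0)"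
proof -
  assume "finite A"
  have "(\<Sum>j\<in>A. (if j = s then 1 else 0) * f j) = (\<Sum>j\<in>A. if j = s then f j else 0)"
    by (rule sum.cong) auto
  then show ?thesis using \<open>finite A\<close> by simp
qed

definition Pm :: "nat \<Rightarrow> (nat \<Rightarrow> int) \<times> nat \<Rightarrow> nat \<Rightarrow> nat \<Rightarrow> kbar" where
  "Pm n p = rootvec n (fst p)"
definition Qm :: "nat \<Rightarrow> nat set \<Rightarrow> (nat \<Rightarrow> nat) \<Rightarrow> (nat \<Rightarrow> int) \<times> nat \<Rightarrow> nat \<Rightarrow> nat \<Rightarrow> kbar" where
  "Qm n \<Gamma>1 \<tau> p = rootvec n (\<lambda>m. - ((tau_ext \<Gamma>1 \<tau> ^^ snd p) (fst p)) m)"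

definition trm :: "nat \<Rightarrow> (nat \<Rightarrow> nat \<Rightarrow> kbar) \<Rightarrow> kbar mat \<Rightarrow> kbar" where
  "trm n P x = (\<Sum>i<n. \<Sum>j<n. P i j * x $$ (j,i))"

definition rp :: "nat \<Rightarrow> tensor \<Rightarrow> kbar mat \<Rightarrow> kbar mat" where
  "rp n R x = mat n n (\<lambda>(s,t). \<Sum>i<n. \<Sum>j<n. R i j s t * x $$ (j,i))"

definition Wterm where
  "Wterm n \<Gamma>1 \<tau> x s t = (\<Sum>p\<in>bd_pairs n \<Gamma>1 \<tau>. trm n (Pm n p) x * Qm n \<Gamma>1 \<tau> p s t)
       - (\<Sum>p\<in>bd_pairs n \<Gamma>1 \<tau>. trm n (Qm n \<Gamma>1 \<tau> p) x * Pm n p s t)"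

lemma rp_entry: assumes "s < n" "t < n"
  shows "rp n (rBD n \<Gamma>1 \<tau> c) x $$ (s,t) =
    (if s = t then (\<Sum>i<n. c i s * x $$ (i,i)) else 0) + (if t < s then x $$ (s,t) else 0)
    + Wterm n \<Gamma>1 \<tau> x s t"
proof -
  let ?U = "\<lambda>i j. \<Sum>\<beta>\<in>pos_roots n. tens (rootvec n \<beta>) (rootvec n (\<lambda>m. - \<beta> m)) i j s t"
  let ?W = "\<lambda>i j. \<Sum>p\<in>bd_pairs n \<Gamma>1 \<tau>. wedge (Pm n p) (Qm n \<Gamma>1 \<tau> p) i j s t"
  have "rp n (rBD n \<Gamma>1 \<tau> c) x $$ (s,t) = (\<Sum>i<n. \<Sum>j<n. (r0_tensor n c i j s t + ?U i j + ?W i j) * x $$ (j,i))"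
    using assms by (simp add: rp_def rBD_def Pm_def Qm_def)
  also have "\<dots> = (\<Sum>i<n. \<Sum>j<n. r0_tensor n c i j s t * x $$ (j,i))
      + (\<Sum>i<n. \<Sum>j<n. ?U i j * x $$ (j,i)) + (\<Sum>i<n. \<Sum>j<n. ?W i j * x $$ (j,i))"
    by (simp add: distrib_right sum.distrib)
  also have "(\<Sum>i<n. \<Sum>j<n. r0_tensor n c i j s t * x $$ (j,i)) = (if s = t then (\<Sum>i<n. c i s * x $$ (i,i)) else 0)"
  proof -
    have "(\<Sum>i<n. \<Sum>j<n. r0_tensor n c i j s t * x $$ (j,i)) = (\<Sum>i<n. if s = t then c i s * x $$ (i,i) else 0)"
    proof (rule sum.cong[OF refl])
      fix i assume i: "i \<in> {..<n}"
      have "(\<Sum>j<n. r0_tensor n c i j s t * x $$ (j,i)) = (\<Sum>j<n. if j = i then (if s = t then c i s * x $$ (i,i) else 0) else 0)"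
        using assms i by (intro sum.cong) (auto simp: r0_tensor_def)
      also have "\<dots> = (if s = t then c i s * x $$ (i,i) else 0)" using i by (simp only: sum.delta finite_lessThan) simp
      finally show "(\<Sum>j<n. r0_tensor n c i j s t * x $$ (j,i)) = (if s = t then c i s * x $$ (i,i) else 0)" .
    qed
    then show ?thesis by simp
  qed
  also have "(\<Sum>i<n. \<Sum>j<n. ?U i j * x $$ (j,i)) = (if t < s then x $$ (s,t) else 0)"
  proof -
    have "(\<Sum>i<n. \<Sum>j<n. ?U i j * x $$ (j,i)) = (\<Sum>i<n. if i = t then (\<Sum>j<n. if j = s then (if t < s then x $$ (s,t) else 0) else 0) else 0)"
      using assms by (intro sum.cong refl) (auto simp: U_point sum_delta_mult)
    also have "\<dots> = (if t < s then x $$ (s,t) else 0)" using assms by simp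
    finally show ?thesis .
  qed
  also have "(\<Sum>i<n. \<Sum>j<n. ?W i j * x $$ (j,i)) = Wterm n \<Gamma>1 \<tau> x s t"
  proof -
    have "(\<Sum>i<n. \<Sum>j<n. ?W i j * x $$ (j,i)) = (\<Sum>i<n. \<Sum>j<n. \<Sum>p\<in>bd_pairs n \<Gamma>1 \<tau>.
       (Pm n p i j * x $$ (j,i)) * Qm n \<Gamma>1 \<tau> p s t - (Qm n \<Gamma>1 \<tau> p i j * x $$ (j,i)) * Pm n p s t)"
      unfolding wedge_def tens_def sum_distrib_right by (intro sum.cong refl) (simp add: algebra_simps)
    also have "\<dots> = (\<Sum>p\<in>bd_pairs n \<Gamma>1 \<tau>. \<Sum>i<n. \<Sum>j<n.
       (Pm n p i j * x $$ (j,i)) * Qm n \<Gamma>1 \<tau> p s t - (Qm n \<Gamma>1 \<tau> p i j * x $$ (j,i)) * Pm n p s t)"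
      by (subst sum.swap) (simp add: sum.swap[of _ "{..<n}" "bd_pairs n \<Gamma>1 \<tau>"])
    also have "\<dots> = Wterm n \<Gamma>1 \<tau> x s t"
      by (simp add: Wterm_def trm_def sum_subtractf sum_distrib_right)
    finally show ?thesis .
  qed
  finally show ?thesis .
qed




definition SS where "SS n \<Gamma>1 \<tau> z s t = (\<Sum>p\<in>bd_pairs n \<Gamma>1 \<tau>. trm n (Pm n p) z * Qm n \<Gamma>1 \<tau> p s t)"
definition TT where "TT n \<Gamma>1 \<tau> z s t = (\<Sum>p\<in>bd_pairs n \<Gamma>1 \<tau>. trm n (Qm n \<Gamma>1 \<tau> p) z * Pm n p s t)"

lemma Wterm_SS: "Wterm n \<Gamma>1 \<tau> x s t = SS n \<Gamma>1 \<tau> x s t - TT n \<Gamma>1 \<tau> x s t"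
  by (simp add: Wterm_def SS_def TT_def)

lemma sum_nz: "sum f A \<noteq> 0 \<Longrightarrow> finite A \<and> (\<exists>a\<in>A. f a \<noteq> 0)"
proof -
  assume h: "sum f A \<noteq> 0"
  have "finite A" using h sum.infinite by blast
  moreover obtain a where "a \<in> A" "f a \<noteq> 0" using sum.not_neutral_contains_not_neutral[OF h] by blast
  ultimately show ?thesis by blast
qed

lemma trm_nz: "trm n P z \<noteq> 0 \<Longrightarrow> \<exists>i<n. \<exists>j<n. P i j \<noteq> 0 \<and> z $$ (j,i) \<noteq> 0"
proof -
  assume "trm n P z \<noteq> 0"
  then obtain i where i: "i<n" "(\<Sum>j<n. P i j * z $$ (j,i)) \<noteq> 0" unfolding trm_def using sum_nz by blast
  then obtain j where j: "j<n" "P i j * z $$ (j,i) \<noteq> 0" using sum_nz[OF i(2)] by blast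
  then show ?thesis using i by auto
qed

definition lowz where "lowz n x = (\<forall>s<n. \<forall>t<n. t<s \<longrightarrow> x $$ (s,t) = (0::kbar))"
definition upz where "upz n x = (\<forall>s<n. \<forall>t<n. s<t \<longrightarrow> x $$ (s,t) = (0::kbar))"
definition dgz where "dgz n x = (\<forall>s<n. x $$ (s,s) = (0::kbar))"
definition Plo where "Plo n \<Gamma>1 \<tau> d x = (\<forall>s<n. \<forall>t<n. t<s \<and> x $$ (s,t) \<noteq> (0::kbar) \<longrightarrow> hh n \<Gamma>1 \<tau> (rt t s) < d)"
definition Pup where "Pup n \<Gamma>1 \<tau> d x = (\<forall>s<n. \<forall>t<n. s<t \<and> x $$ (s,t) \<noteq> (0::kbar) \<longrightarrow> d \<le> hh n \<Gamma>1 \<tau> (rt s t))"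

lemma down_ind: "(\<And>d. P (Suc d) \<Longrightarrow> P d) \<Longrightarrow> P D \<Longrightarrow> P 0"
  by (induction D) auto

context
  fixes n :: nat and \<Gamma>1 :: "nat set" and \<tau> :: "nat \<Rightarrow> nat"
  assumes G1: "\<Gamma>1 \<subseteq> {0..<n-1}" and T1: "\<forall>j\<in>\<Gamma>1. \<tau> j < n-1"
begin

lemma Qm_gam: "Qm n \<Gamma>1 \<tau> p = rootvec n (\<lambda>m. - gam \<Gamma>1 \<tau> p m)"
  by (simp add: Qm_def gam_def[OF G1 T1])

lemma Pm_nz: "p \<in> bd_pairs n \<Gamma>1 \<tau> \<Longrightarrow> Pm n p i j \<noteq> 0 \<Longrightarrow> i<j \<and> fst p = rt i j"
  unfolding Pm_def by (rule F1[OF G1 T1])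

lemma Qm_nz: "p \<in> bd_pairs n \<Gamma>1 \<tau> \<Longrightarrow> Qm n \<Gamma>1 \<tau> p s t \<noteq> 0 \<Longrightarrow> t<s \<and> gam \<Gamma>1 \<tau> p = rt t s"
  unfolding Qm_gam by (rule F2[OF G1 T1])

lemma hh_dec: "finite (bd_pairs n \<Gamma>1 \<tau>) \<Longrightarrow> p \<in> bd_pairs n \<Gamma>1 \<tau> \<Longrightarrow> Pm n p a b \<noteq> 0 \<Longrightarrow>
   Qm n \<Gamma>1 \<tau> p s t \<noteq> 0 \<Longrightarrow> hh n \<Gamma>1 \<tau> (rt t s) < hh n \<Gamma>1 \<tau> (rt a b)"
  using F3[OF G1 T1, of p] Pm_nz[of p a b] Qm_nz[of p s t] by simp


lemma SS_nz: "SS n \<Gamma>1 \<tau> z s t \<noteq> 0 \<Longrightarrow> finite (bd_pairs n \<Gamma>1 \<tau>) \<and> (\<exists>p\<in>bd_pairs n \<Gamma>1 \<tau>.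
   (\<exists>i<n. \<exists>j<n. Pm n p i j \<noteq> 0 \<and> z $$ (j,i) \<noteq> 0) \<and> Qm n \<Gamma>1 \<tau> p s t \<noteq> 0)"
proof -
  assume h: "SS n \<Gamma>1 \<tau> z s t \<noteq> 0"
  from sum_nz[OF h[unfolded SS_def]] obtain p where p: "finite (bd_pairs n \<Gamma>1 \<tau>)" "p \<in> bd_pairs n \<Gamma>1 \<tau>"
     "trm n (Pm n p) z * Qm n \<Gamma>1 \<tau> p s t \<noteq> 0" by blast
  then have "trm n (Pm n p) z \<noteq> 0" "Qm n \<Gamma>1 \<tau> p s t \<noteq> 0" by auto
  with trm_nz[OF this(1)] p show ?thesis by blast
qed

lemma TT_nz: "TT n \<Gamma>1 \<tau> z s t \<noteq> 0 \<Longrightarrow> finite (bd_pairs n \<Gamma>1 \<tau>) \<and> (\<exists>p\<in>bd_pairs n \<Gamma>1 \<tau>.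
   (\<exists>i<n. \<exists>j<n. Qm n \<Gamma>1 \<tau> p i j \<noteq> 0 \<and> z $$ (j,i) \<noteq> 0) \<and> Pm n p s t \<noteq> 0)"
proof -
  assume h: "TT n \<Gamma>1 \<tau> z s t \<noteq> 0"
  from sum_nz[OF h[unfolded TT_def]] obtain p where p: "finite (bd_pairs n \<Gamma>1 \<tau>)" "p \<in> bd_pairs n \<Gamma>1 \<tau>"
     "trm n (Qm n \<Gamma>1 \<tau> p) z * Pm n p s t \<noteq> 0" by blast
  then have "trm n (Qm n \<Gamma>1 \<tau> p) z \<noteq> 0" "Pm n p s t \<noteq> 0" by auto
  with trm_nz[OF this(1)] p show ?thesis by blast
qed

lemma SS_0: assumes "\<not> t < s" shows "SS n \<Gamma>1 \<tau> z s t = 0"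
proof (rule ccontr)
  assume "SS n \<Gamma>1 \<tau> z s t \<noteq> 0"
  then obtain p where "p \<in> bd_pairs n \<Gamma>1 \<tau>" "Qm n \<Gamma>1 \<tau> p s t \<noteq> 0" using SS_nz by blast
  then have "t < s" using Qm_nz by blast
  then show False using assms by simp
qed

lemma TT_0: assumes "\<not> s < t" shows "TT n \<Gamma>1 \<tau> z s t = 0"
proof (rule ccontr)
  assume "TT n \<Gamma>1 \<tau> z s t \<noteq> 0"
  then obtain p where "p \<in> bd_pairs n \<Gamma>1 \<tau>" "Pm n p s t \<noteq> 0" using TT_nz by blast
  then have "s < t" using Pm_nz by blast
  then show False using assms by simp
qed

lemma E_low: "s<n \<Longrightarrow> t<s \<Longrightarrow> rp n (rBD n \<Gamma>1 \<tau> c) x $$ (s,t) = x $$ (s,t) + SS n \<Gamma>1 \<tau> x s t"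
  by (simp add: rp_entry Wterm_SS TT_0)

lemma E_up: "t<n \<Longrightarrow> s<t \<Longrightarrow> rp n (rBD n \<Gamma>1 \<tau> c) x $$ (s,t) = - TT n \<Gamma>1 \<tau> x s t"
  by (simp add: rp_entry Wterm_SS SS_0)

lemma E_dg: "s<n \<Longrightarrow> rp n (rBD n \<Gamma>1 \<tau> c) x $$ (s,s) = (\<Sum>i<n. c i s * x $$ (i,i))"
  by (simp add: rp_entry Wterm_SS SS_0 TT_0)

lemma Plo_step: assumes "lowz n (rp n (rBD n \<Gamma>1 \<tau> c) z)" "Plo n \<Gamma>1 \<tau> (Suc d) z"
  shows "Plo n \<Gamma>1 \<tau> d z"
  unfolding Plo_def
proof (intro allI impI)
  fix s t assume st: "s < n" "t < n" "t < s \<and> z $$ (s,t) \<noteq> 0"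
  then have "0 = z $$ (s,t) + SS n \<Gamma>1 \<tau> z s t" using assms(1) E_low[of s t c z] by (auto simp: lowz_def)
  then have "SS n \<Gamma>1 \<tau> z s t \<noteq> 0" using st by (metis add.right_neutral)
  from SS_nz[OF this] obtain p i j where p: "finite (bd_pairs n \<Gamma>1 \<tau>)" "p \<in> bd_pairs n \<Gamma>1 \<tau>"
    "i<n" "j<n" "Pm n p i j \<noteq> 0" "z $$ (j,i) \<noteq> 0" "Qm n \<Gamma>1 \<tau> p s t \<noteq> 0" by blast
  have "i < j" using Pm_nz p by blast
  then have "hh n \<Gamma>1 \<tau> (rt i j) < Suc d" using assms(2) p by (auto simp: Plo_def)
  moreover have "hh n \<Gamma>1 \<tau> (rt t s) < hh n \<Gamma>1 \<tau> (rt i j)" using hh_dec p by blast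
  ultimately show "hh n \<Gamma>1 \<tau> (rt t s) < d" by simp
qed

lemma low_back: assumes "lowz n (rp n (rBD n \<Gamma>1 \<tau> c) z)" shows "lowz n z"
proof (cases "finite (bd_pairs n \<Gamma>1 \<tau>)")
  case True
  have "Plo n \<Gamma>1 \<tau> (Suc (card (bd_pairs n \<Gamma>1 \<tau>))) z"
    using hh_le[OF G1 T1 True] by (auto simp: Plo_def le_imp_less_Suc)
  then have "Plo n \<Gamma>1 \<tau> 0 z" by (rule down_ind[rotated]) (rule Plo_step[OF assms])
  then show ?thesis by (auto simp: Plo_def lowz_def)
next
  case False
  then show ?thesis using assms E_low[of _ _ c z] SS_nz by (fastforce simp: lowz_def)
qed

end



lemma rp_carrier[simp]: "rp n R x \<in> carrier_mat n n"
  by (simp add: rp_def)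

lemma zero_matI: assumes "x \<in> carrier_mat n n" "lowz n x" "upz n x" "dgz n x" shows "x = 0\<^sub>m n n"
proof (rule eq_matI)
  fix i j assume "i < dim_row (0\<^sub>m n n)" "j < dim_col (0\<^sub>m n n)"
  then show "x $$ (i,j) = 0\<^sub>m n n $$ (i,j)" using assms
    by (cases i j rule: linorder_cases) (auto simp: lowz_def upz_def dgz_def)
qed (use assms in auto)

context
  fixes n :: nat and \<Gamma>1 :: "nat set" and \<tau> :: "nat \<Rightarrow> nat" and c :: "nat \<Rightarrow> nat \<Rightarrow> kbar"
  assumes G1: "\<Gamma>1 \<subseteq> {0..<n-1}" and T1: "\<forall>j\<in>\<Gamma>1. \<tau> j < n-1"
begin

abbreviation "R \<equiv> rBD n \<Gamma>1 \<tau> c"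

lemmas E_low' = E_low[OF G1 T1] and E_up' = E_up[OF G1 T1] and E_dg' = E_dg[OF G1 T1]
  and SS_nz' = SS_nz[OF G1 T1] and TT_nz' = TT_nz[OF G1 T1] and Pm_nz' = Pm_nz[OF G1 T1]
  and Qm_nz' = Qm_nz[OF G1 T1] and hh_dec' = hh_dec[OF G1 T1] and hh_le' = hh_le[OF G1 T1]

lemma up_back: assumes "z \<in> carrier_mat n n" "upz n (rp n R z - z)" shows "upz n z"
proof -
  have key: "z $$ (s,t) = - TT n \<Gamma>1 \<tau> z s t" if st: "s<n" "t<n" "s<t" for s t
  proof -
    have "(rp n R z - z) $$ (s,t) = 0" using assms st by (auto simp: upz_def)
    then have "- TT n \<Gamma>1 \<tau> z s t - z $$ (s,t) = 0" using assms(1) st E_up'[of t s c z] by simp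
    then show ?thesis by (simp add: algebra_simps)
  qed
  have step: "Pup n \<Gamma>1 \<tau> (Suc d) z" if "Pup n \<Gamma>1 \<tau> d z" for d
    unfolding Pup_def
  proof (intro allI impI)
    fix s t assume st: "s < n" "t < n" "s < t \<and> z $$ (s,t) \<noteq> 0"
    then have "TT n \<Gamma>1 \<tau> z s t \<noteq> 0" using key by force
    from TT_nz'[OF this] obtain p i j where p: "finite (bd_pairs n \<Gamma>1 \<tau>)" "p \<in> bd_pairs n \<Gamma>1 \<tau>"
      "i<n" "j<n" "Qm n \<Gamma>1 \<tau> p i j \<noteq> 0" "z $$ (j,i) \<noteq> 0" "Pm n p s t \<noteq> 0" by blast
    have "j < i" using Qm_nz' p by blast
    then have "d \<le> hh n \<Gamma>1 \<tau> (rt j i)" using that p by (auto simp: Pup_def)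
    moreover have "hh n \<Gamma>1 \<tau> (rt j i) < hh n \<Gamma>1 \<tau> (rt s t)" using hh_dec' p by blast
    ultimately show "Suc d \<le> hh n \<Gamma>1 \<tau> (rt s t)" by simp
  qed
  have all: "Pup n \<Gamma>1 \<tau> d z" for d
  proof (induction d)
    case 0 then show ?case by (simp add: Pup_def)
  next
    case (Suc d) then show ?case by (rule step)
  qed
  show ?thesis
  proof (cases "finite (bd_pairs n \<Gamma>1 \<tau>)")
    case True
    have "Pup n \<Gamma>1 \<tau> (Suc (card (bd_pairs n \<Gamma>1 \<tau>))) z" by (rule all)
    then show ?thesis using hh_le'[OF True] unfolding Pup_def upz_def
      by (meson not_less_eq_eq)
  next
    case False
    then show ?thesis using key TT_nz' by (fastforce simp: upz_def)
  qed
qed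

lemma rp_SU: assumes "x \<in> carrier_mat n n" "lowz n x" "dgz n x"
  shows "lowz n (rp n R x)" "dgz n (rp n R x)"
proof -
  show "lowz n (rp n R x)" unfolding lowz_def
  proof (intro allI impI)
    fix s t assume st: "s<n" "t<n" "t<s"
    have "SS n \<Gamma>1 \<tau> x s t = 0"
    proof (rule ccontr)
      assume "SS n \<Gamma>1 \<tau> x s t \<noteq> 0"
      from SS_nz'[OF this] obtain p i j where p: "p \<in> bd_pairs n \<Gamma>1 \<tau>"
        "i<n" "j<n" "Pm n p i j \<noteq> 0" "x $$ (j,i) \<noteq> 0" by blast
      have "i < j" using Pm_nz' p by blast
      then show False using assms(2) p by (auto simp: lowz_def)
    qed
    then show "rp n R x $$ (s,t) = 0" using E_low'[of s t c x] st assms(2) by (simp add: lowz_def)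
  qed
  show "dgz n (rp n R x)" using assms(3) by (simp add: dgz_def E_dg')
qed

lemma rp_SU_Pup: assumes "x \<in> carrier_mat n n" "lowz n x" "dgz n x" "Pup n \<Gamma>1 \<tau> d x"
  shows "Pup n \<Gamma>1 \<tau> (Suc d) (rp n R x)"
  unfolding Pup_def
proof (intro allI impI)
  fix s t assume st: "s < n" "t < n" "s < t \<and> rp n R x $$ (s,t) \<noteq> 0"
  then have "TT n \<Gamma>1 \<tau> x s t \<noteq> 0" using E_up'[of t s c x] by force
  from TT_nz'[OF this] obtain p i j where p: "finite (bd_pairs n \<Gamma>1 \<tau>)" "p \<in> bd_pairs n \<Gamma>1 \<tau>"
    "i<n" "j<n" "Qm n \<Gamma>1 \<tau> p i j \<noteq> 0" "x $$ (j,i) \<noteq> 0" "Pm n p s t \<noteq> 0" by blast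
  have "j < i" using Qm_nz' p by blast
  then have "d \<le> hh n \<Gamma>1 \<tau> (rt j i)" using assms(4) p by (auto simp: Pup_def)
  moreover have "hh n \<Gamma>1 \<tau> (rt j i) < hh n \<Gamma>1 \<tau> (rt s t)" using hh_dec' p by blast
  ultimately show "Suc d \<le> hh n \<Gamma>1 \<tau> (rt s t)" by simp
qed

lemma nil_plus: assumes "x \<in> carrier_mat n n" "lowz n x" "dgz n x"
  shows "\<exists>N. (rp n R ^^ N) x = 0\<^sub>m n n"
proof -
  have it: "(rp n R ^^ k) x \<in> carrier_mat n n \<and> lowz n ((rp n R ^^ k) x) \<and> dgz n ((rp n R ^^ k) x)
     \<and> Pup n \<Gamma>1 \<tau> k ((rp n R ^^ k) x)" for k
  proof (induction k)
    case 0 then show ?case using assms by (simp add: Pup_def)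
  next
    case (Suc k) then show ?case using rp_SU rp_SU_Pup by simp
  qed
  show ?thesis
  proof (cases "finite (bd_pairs n \<Gamma>1 \<tau>)")
    case True
    let ?N = "Suc (card (bd_pairs n \<Gamma>1 \<tau>))"
    have "upz n ((rp n R ^^ ?N) x)"
      using it[of ?N] hh_le'[OF True] unfolding Pup_def upz_def by (meson not_less_eq_eq)
    then show ?thesis using it[of ?N] zero_matI by blast
  next
    case False
    have "upz n (rp n R x)" using False TT_nz' E_up' by (fastforce simp: upz_def)
    then have "rp n R x = 0\<^sub>m n n" using rp_SU[OF assms] by (intro zero_matI) auto
    then have "(rp n R ^^ 1) x = 0\<^sub>m n n" by simp
    then show ?thesis by blast
  qed
qed

definition rq where "rq x = rp n R x - x"

lemma rq_carrier: "x \<in> carrier_mat n n \<Longrightarrow> rq x \<in> carrier_mat n n"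
  unfolding rq_def by (rule minus_carrier_mat) simp

lemma rq_SL: assumes "x \<in> carrier_mat n n" "upz n x" "dgz n x"
  shows "upz n (rq x)" "dgz n (rq x)"
proof -
  show "upz n (rq x)" unfolding upz_def
  proof (intro allI impI)
    fix s t assume st: "s<n" "t<n" "s<t"
    have "TT n \<Gamma>1 \<tau> x s t = 0"
    proof (rule ccontr)
      assume "TT n \<Gamma>1 \<tau> x s t \<noteq> 0"
      from TT_nz'[OF this] obtain p i j where p: "p \<in> bd_pairs n \<Gamma>1 \<tau>"
        "i<n" "j<n" "Qm n \<Gamma>1 \<tau> p i j \<noteq> 0" "x $$ (j,i) \<noteq> 0" by blast
      have "j < i" using Qm_nz' p by blast
      then show False using assms(2) p by (auto simp: upz_def)
    qed
    then show "rq x $$ (s,t) = 0" using E_up'[of t s c x] st assms(1,2) by (simp add: upz_def rq_def)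
  qed
  show "dgz n (rq x)" using assms(1,3) by (simp add: dgz_def E_dg' rq_def)
qed

lemma rq_Plo: assumes "x \<in> carrier_mat n n" "Plo n \<Gamma>1 \<tau> (Suc d) x"
  shows "Plo n \<Gamma>1 \<tau> d (rq x)"
  unfolding Plo_def
proof (intro allI impI)
  fix s t assume st: "s < n" "t < n" "t < s \<and> rq x $$ (s,t) \<noteq> 0"
  then have "SS n \<Gamma>1 \<tau> x s t \<noteq> 0" using E_low'[of s t c x] assms(1) by (auto simp: rq_def)
  from SS_nz'[OF this] obtain p i j where p: "finite (bd_pairs n \<Gamma>1 \<tau>)" "p \<in> bd_pairs n \<Gamma>1 \<tau>"
    "i<n" "j<n" "Pm n p i j \<noteq> 0" "x $$ (j,i) \<noteq> 0" "Qm n \<Gamma>1 \<tau> p s t \<noteq> 0" by blast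
  have "i < j" using Pm_nz' p by blast
  then have "hh n \<Gamma>1 \<tau> (rt i j) < Suc d" using assms(2) p by (auto simp: Plo_def)
  moreover have "hh n \<Gamma>1 \<tau> (rt t s) < hh n \<Gamma>1 \<tau> (rt i j)" using hh_dec' p by blast
  ultimately show "hh n \<Gamma>1 \<tau> (rt t s) < d" by simp
qed

lemma nil_minus: assumes "x \<in> carrier_mat n n" "upz n x" "dgz n x"
  shows "\<exists>N. (rq ^^ N) x = 0\<^sub>m n n"
proof -
  have it: "\<And>y. y \<in> carrier_mat n n \<Longrightarrow> upz n y \<Longrightarrow> dgz n y \<Longrightarrow> Plo n \<Gamma>1 \<tau> k y \<Longrightarrow>
     (rq ^^ k) y \<in> carrier_mat n n \<and> upz n ((rq ^^ k) y) \<and> dgz n ((rq ^^ k) y) \<and> Plo n \<Gamma>1 \<tau> 0 ((rq ^^ k) y)" for k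
  proof (induction k)
    case 0 then show ?case by simp
  next
    case (Suc k)
    have "rq y \<in> carrier_mat n n" "upz n (rq y)" "dgz n (rq y)" "Plo n \<Gamma>1 \<tau> k (rq y)"
      using Suc.prems rq_carrier rq_SL rq_Plo by auto
    from Suc.IH[OF this] show ?case by (simp add: funpow_Suc_right del: funpow.simps)
  qed
  show ?thesis
  proof (cases "finite (bd_pairs n \<Gamma>1 \<tau>)")
    case True
    let ?N = "Suc (card (bd_pairs n \<Gamma>1 \<tau>))"
    have "Plo n \<Gamma>1 \<tau> ?N x" using hh_le'[OF True] by (auto simp: Plo_def le_imp_less_Suc)
    from it[OF assms this] have "lowz n ((rq ^^ ?N) x)" "(rq ^^ ?N) x \<in> carrier_mat n n"
      "upz n ((rq ^^ ?N) x)" "dgz n ((rq ^^ ?N) x)"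
      by (auto simp: Plo_def lowz_def)
    then show ?thesis using zero_matI by blast
  next
    case False
    have "lowz n (rq x)" unfolding lowz_def
    proof (intro allI impI)
      fix s t assume st: "s<n" "t<n" "t<s"
      have "SS n \<Gamma>1 \<tau> x s t = 0" using False SS_nz' by blast
      then show "rq x $$ (s,t) = 0" using E_low'[of s t c x] st assms(1) by (simp add: rq_def)
    qed
    then have "rq x = 0\<^sub>m n n" using rq_SL[OF assms] rq_carrier[OF assms(1)] by (intro zero_matI) auto
    then have "(rq ^^ 1) x = 0\<^sub>m n n" by simp
    then show ?thesis by blast
  qed
qed

end



lemma swap2in: "(\<Sum>i\<in>I. \<Sum>j\<in>J. \<Sum>a\<in>K. (f i j a :: 'a::comm_monoid_add)) = (\<Sum>a\<in>K. \<Sum>i\<in>I. \<Sum>j\<in>J. f i j a)"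
proof -
  have "(\<Sum>i\<in>I. \<Sum>j\<in>J. \<Sum>a\<in>K. f i j a) = (\<Sum>i\<in>I. \<Sum>a\<in>K. \<Sum>j\<in>J. f i j a)"
    by (rule sum.cong[OF refl], rule sum.swap)
  also have "\<dots> = (\<Sum>a\<in>K. \<Sum>i\<in>I. \<Sum>j\<in>J. f i j a)" by (rule sum.swap)
  finally show ?thesis .
qed

lemma swap6: "(\<Sum>i\<in>I. \<Sum>j\<in>J. \<Sum>a\<in>K1. \<Sum>b\<in>K2. \<Sum>k\<in>K3. \<Sum>l\<in>K4. (F i j a b k l :: 'a::comm_monoid_add))
   = (\<Sum>a\<in>K1. \<Sum>b\<in>K2. \<Sum>k\<in>K3. \<Sum>l\<in>K4. \<Sum>i\<in>I. \<Sum>j\<in>J. F i j a b k l)"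
proof -
  have "(\<Sum>i\<in>I. \<Sum>j\<in>J. \<Sum>a\<in>K1. \<Sum>b\<in>K2. \<Sum>k\<in>K3. \<Sum>l\<in>K4. F i j a b k l)
      = (\<Sum>a\<in>K1. \<Sum>i\<in>I. \<Sum>j\<in>J. \<Sum>b\<in>K2. \<Sum>k\<in>K3. \<Sum>l\<in>K4. F i j a b k l)" by (rule swap2in)
  also have "\<dots> = (\<Sum>a\<in>K1. \<Sum>b\<in>K2. \<Sum>i\<in>I. \<Sum>j\<in>J. \<Sum>k\<in>K3. \<Sum>l\<in>K4. F i j a b k l)"
    by (rule sum.cong[OF refl], rule swap2in)
  also have "\<dots> = (\<Sum>a\<in>K1. \<Sum>b\<in>K2. \<Sum>k\<in>K3. \<Sum>i\<in>I. \<Sum>j\<in>J. \<Sum>l\<in>K4. F i j a b k l)"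
    by (rule sum.cong[OF refl], rule sum.cong[OF refl], rule swap2in)
  also have "\<dots> = (\<Sum>a\<in>K1. \<Sum>b\<in>K2. \<Sum>k\<in>K3. \<Sum>l\<in>K4. \<Sum>i\<in>I. \<Sum>j\<in>J. F i j a b k l)"
    by (rule sum.cong[OF refl], rule sum.cong[OF refl], rule sum.cong[OF refl], rule swap2in)
  finally show ?thesis .
qed

lemma mult_entry: "M \<in> carrier_mat a m \<Longrightarrow> N \<in> carrier_mat m b \<Longrightarrow> i<a \<Longrightarrow> j<b \<Longrightarrow>
   (M*N) $$ (i,j) = (\<Sum>k<m. M $$ (i,k) * N $$ (k,j))"
  by (auto simp: scalar_prod_def lessThan_atLeast0 intro!: sum.cong)

lemma rp_commute:
  fixes T :: tensor
  assumes A: "A \<in> carrier_mat n n" and B: "B \<in> carrier_mat n n" and BA: "B * A = 1\<^sub>m n"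
    and Ad: "Ad2 n A B T = T" and x: "x \<in> carrier_mat n n"
  shows "rp n T (A*x*B) = A * rp n T x * B"
proof (rule eq_matI)
  fix s t assume "s < dim_row (A * rp n T x * B)" "t < dim_col (A * rp n T x * B)"
  then have st: "s < n" "t < n" using A B by auto
  define Y where "Y = A*x*B"
  have Y: "Y \<in> carrier_mat n n" using A B x by (simp add: Y_def)
  have Rij: "T i j s t = (\<Sum>a<n. \<Sum>b<n. \<Sum>k<n. \<Sum>l<n. A$$(i,a) * T a b k l * B$$(b,j) * A$$(s,k) * B$$(l,t))"
    if "i<n" "j<n" for i j
  proof -
    have "T i j s t = Ad2 n A B T i j s t" using Ad by simp
    then show ?thesis using that st by (simp add: Ad2_def)
  qed
  have BYA: "B * Y * A = x"
  proof -
    have "B * Y * A = B * (A * x * B) * A" by (simp add: Y_def)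
    also have "\<dots> = ((B * A) * x) * (B * A)" using A B x by (simp add: assoc_mult_mat[of _ n n _ n _ n])
    also have "\<dots> = x" using BA x by simp
    finally show ?thesis .
  qed
  have key: "(\<Sum>i<n. \<Sum>j<n. A$$(i,a) * B$$(b,j) * Y$$(j,i)) = x$$(b,a)" if "a<n" "b<n" for a b
  proof -
    have "x$$(b,a) = (B * Y * A) $$ (b,a)" using BYA by simp
    also have "\<dots> = (\<Sum>i<n. (B*Y)$$(b,i) * A$$(i,a))" using that A B Y by (intro mult_entry) auto
    also have "\<dots> = (\<Sum>i<n. (\<Sum>j<n. B$$(b,j) * Y$$(j,i)) * A$$(i,a))"
      using that A B Y by (intro sum.cong refl) (simp add: mult_entry[OF B Y] del: index_mult_mat)
    also have "\<dots> = (\<Sum>i<n. \<Sum>j<n. A$$(i,a) * B$$(b,j) * Y$$(j,i))"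
      by (simp add: sum_distrib_right sum_distrib_left mult.commute mult.left_commute)
    finally show ?thesis by simp
  qed
  have "rp n T Y $$ (s,t) = (\<Sum>i<n. \<Sum>j<n. T i j s t * Y $$ (j,i))" using st by (simp add: rp_def)
  also have "\<dots> = (\<Sum>i<n. \<Sum>j<n. \<Sum>a<n. \<Sum>b<n. \<Sum>k<n. \<Sum>l<n.
       (T a b k l * A$$(s,k) * B$$(l,t)) * (A$$(i,a) * B$$(b,j) * Y$$(j,i)))"
    by (intro sum.cong refl) (simp add: Rij sum_distrib_right sum_distrib_left mult.commute mult.left_commute)
  also have "\<dots> = (\<Sum>a<n. \<Sum>b<n. \<Sum>k<n. \<Sum>l<n. \<Sum>i<n. \<Sum>j<n.
       (T a b k l * A$$(s,k) * B$$(l,t)) * (A$$(i,a) * B$$(b,j) * Y$$(j,i)))"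
    by (rule swap6)
  also have "\<dots> = (\<Sum>a<n. \<Sum>b<n. \<Sum>k<n. \<Sum>l<n. (T a b k l * A$$(s,k) * B$$(l,t)) * x$$(b,a))"
    by (intro sum.cong refl) (simp add: sum_distrib_left[symmetric] key)
  also have "\<dots> = (\<Sum>l<n. \<Sum>k<n. \<Sum>a<n. \<Sum>b<n. (T a b k l * A$$(s,k) * B$$(l,t)) * x$$(b,a))"
  proof -
    have "(\<Sum>l<n. \<Sum>k<n. \<Sum>a<n. \<Sum>b<n. (T a b k l * A$$(s,k) * B$$(l,t)) * x$$(b,a))
        = (\<Sum>a<n. \<Sum>l<n. \<Sum>k<n. \<Sum>b<n. (T a b k l * A$$(s,k) * B$$(l,t)) * x$$(b,a))" by (rule swap2in)
    also have "\<dots> = (\<Sum>a<n. \<Sum>b<n. \<Sum>l<n. \<Sum>k<n. (T a b k l * A$$(s,k) * B$$(l,t)) * x$$(b,a))"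
      by (rule sum.cong[OF refl], rule swap2in)
    also have "\<dots> = (\<Sum>a<n. \<Sum>b<n. \<Sum>k<n. \<Sum>l<n. (T a b k l * A$$(s,k) * B$$(l,t)) * x$$(b,a))"
      by (rule sum.cong[OF refl], rule sum.cong[OF refl], rule sum.swap)
    finally show ?thesis by simp
  qed
  also have "\<dots> = (\<Sum>l<n. (\<Sum>k<n. A$$(s,k) * rp n T x $$ (k,l)) * B$$(l,t))"
    by (intro sum.cong refl) (simp add: rp_def sum_distrib_left sum_distrib_right mult.commute mult.left_commute)
  also have "\<dots> = (A * rp n T x * B) $$ (s,t)"
  proof -
    have "(A * rp n T x * B) $$ (s,t) = (\<Sum>l<n. (A * rp n T x) $$ (s,l) * B$$(l,t))"
      using A B st by (intro mult_entry[of _ n n]) auto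
    also have "\<dots> = (\<Sum>l<n. (\<Sum>k<n. A$$(s,k) * rp n T x $$ (k,l)) * B$$(l,t))"
      using A st by (intro sum.cong refl) (simp add: mult_entry[OF A rp_carrier] del: index_mult_mat)
    finally show ?thesis by simp
  qed
  finally show "rp n T (A*x*B) $$ (s,t) = (A * rp n T x * B) $$ (s,t)" by (simp add: Y_def)
qed (use A B in \<open>auto simp: rp_def\<close>)




definition eu :: "nat \<Rightarrow> nat \<Rightarrow> nat \<Rightarrow> kbar mat" where
  "eu n a b = mat n n (\<lambda>(i,j). if i = a \<and> j = b then 1 else 0)"

lemma eu_carrier[simp]: "eu n a b \<in> carrier_mat n n" by (simp add: eu_def)

lemma eu_index: "i<n \<Longrightarrow> j<n \<Longrightarrow> eu n a b $$ (i,j) = (if i = a \<and> j = b then 1 else 0)"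
  by (simp add: eu_def)

lemma eu_sq: assumes "a \<noteq> b" shows "eu n a b * eu n a b = 0\<^sub>m n n"
proof (rule eq_matI)
  fix i j assume ij: "i < dim_row (0\<^sub>m n n :: kbar mat)" "j < dim_col (0\<^sub>m n n :: kbar mat)"
  have "(eu n a b * eu n a b) $$ (i,j) = (\<Sum>k<n. eu n a b $$ (i,k) * eu n a b $$ (k,j))"
    using ij by (intro mult_entry) auto
  also have "\<dots> = 0" using ij assms by (intro sum.neutral) (auto simp: eu_index)
  finally show "(eu n a b * eu n a b) $$ (i,j) = 0\<^sub>m n n $$ (i,j)" using ij by simp
qed (auto simp: eu_def)

lemma eu_left: assumes "a<n" "b<n" "j<n" "Z \<in> carrier_mat n n" shows "(eu n a b * Z) $$ (a,j) = Z $$ (b,j)"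
proof -
  have "(eu n a b * Z) $$ (a,j) = (\<Sum>k<n. eu n a b $$ (a,k) * Z $$ (k,j))"
    using assms by (intro mult_entry) auto
  also have "\<dots> = (\<Sum>k<n. (if k = b then 1 else 0) * Z $$ (k,j))"
    using assms by (intro sum.cong) (auto simp: eu_index)
  also have "\<dots> = Z $$ (b,j)" using assms by (simp add: sum_delta_mult)
  finally show ?thesis .
qed

lemma right_unit_entry: assumes "i<n" "j<n" "Z \<in> carrier_mat n n" shows "(Z * eu n j j) $$ (i,j) = Z $$ (i,j)"
proof -
  have "(Z * eu n j j) $$ (i,j) = (\<Sum>k<n. Z $$ (i,k) * eu n j j $$ (k,j))"
    using assms by (intro mult_entry) auto
  also have "\<dots> = (\<Sum>k<n. (if k = j then 1 else 0) * Z $$ (i,k))"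
    using assms by (intro sum.cong) (auto simp: eu_index)
  also have "\<dots> = Z $$ (i,j)" using assms by (simp add: sum_delta_mult)
  finally show ?thesis .
qed

lemma nilp_diag: fixes y :: "kbar mat" assumes y: "y \<in> carrier_mat n n" and yy: "y * y = 0\<^sub>m n n" and i: "i<n"
  and tri: "\<forall>k<n. k \<noteq> i \<longrightarrow> y $$ (i,k) * y $$ (k,i) = 0"
  shows "y $$ (i,i) = 0"
proof -
  have "0 = (y * y) $$ (i,i)" using yy i by simp
  also have "\<dots> = (\<Sum>k<n. y $$ (i,k) * y $$ (k,i))" using y i by (intro mult_entry) auto
  also have "\<dots> = y $$ (i,i) * y $$ (i,i)"
    using i tri by (subst sum.remove[of _ i]) (auto intro!: sum.neutral)
  finally show ?thesis by (metis mult_eq_0_iff)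
qed

lemma conj_sq: fixes A B E :: "kbar mat" assumes A: "A \<in> carrier_mat n n" and B: "B \<in> carrier_mat n n" and BA: "B * A = 1\<^sub>m n"
  and E: "E \<in> carrier_mat n n" and EE: "E * E = 0\<^sub>m n n"
  shows "(A * E * B) * (A * E * B) = 0\<^sub>m n n"
proof -
  have "(A * E * B) * (A * E * B) = A * (E * ((B * A) * (E * B)))"
    using A B E by (simp add: assoc_mult_mat[of _ n n _ n _ n])
  also have "\<dots> = A * ((E * E) * B)" using BA E B left_mult_one_mat[of "E * B" n n] by (simp add: assoc_mult_mat[of _ n n _ n _ n])
  also have "\<dots> = 0\<^sub>m n n" using EE A B by simp
  finally show ?thesis .
qed




context
  fixes n :: nat and \<Gamma>1 :: "nat set" and \<tau> :: "nat \<Rightarrow> nat" and c :: "nat \<Rightarrow> nat \<Rightarrow> kbar"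
    and A B :: "kbar mat"
  assumes G1: "\<Gamma>1 \<subseteq> {0..<n-1}" and T1: "\<forall>j\<in>\<Gamma>1. \<tau> j < n-1"
    and A: "A \<in> carrier_mat n n" and B: "B \<in> carrier_mat n n"
    and AB: "A * B = 1\<^sub>m n" and BA: "B * A = 1\<^sub>m n"
    and Ad: "Ad2 n A B (rBD n \<Gamma>1 \<tau> c) = rBD n \<Gamma>1 \<tau> c"
begin

abbreviation "RR \<equiv> rBD n \<Gamma>1 \<tau> c"

lemma iter_carrier: "x \<in> carrier_mat n n \<Longrightarrow> (rp n RR ^^ k) x \<in> carrier_mat n n"
  by (induction k) auto

lemma iter_comm: "x \<in> carrier_mat n n \<Longrightarrow> (rp n RR ^^ k) (A*x*B) = A * (rp n RR ^^ k) x * B"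
proof (induction k)
  case 0 then show ?case by simp
next
  case (Suc k)
  have "(rp n RR ^^ Suc k) (A*x*B) = rp n RR (A * (rp n RR ^^ k) x * B)" using Suc by simp
  also have "\<dots> = A * rp n RR ((rp n RR ^^ k) x) * B"
    by (rule rp_commute[OF A B BA Ad iter_carrier[OF Suc.prems]])
  finally show ?case by simp
qed

lemma rq_comm: assumes x: "x \<in> carrier_mat n n"
  shows "rq n \<Gamma>1 \<tau> c (A*x*B) = A * rq n \<Gamma>1 \<tau> c x * B"
proof -
  have rpx: "rp n RR x \<in> carrier_mat n n" by simp
  have "rq n \<Gamma>1 \<tau> c (A*x*B) = A * rp n RR x * B - A * x * B"
    unfolding rq_def[OF G1 T1] using rp_commute[OF A B BA Ad x] by simp
  also have "\<dots> = (A * rp n RR x - A * x) * B"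
    using A B x rpx by (subst minus_mult_distrib_mat[of _ n n]) auto
  also have "\<dots> = A * (rp n RR x - x) * B"
    using A x rpx by (subst mult_minus_distrib_mat[of _ n n]) auto
  finally show ?thesis unfolding rq_def[OF G1 T1] .
qed

lemma rq_iter_carrier: "x \<in> carrier_mat n n \<Longrightarrow> (rq n \<Gamma>1 \<tau> c ^^ k) x \<in> carrier_mat n n"
  by (induction k) (auto intro: rq_carrier[OF G1 T1])

lemma rq_iter_comm: "x \<in> carrier_mat n n \<Longrightarrow> (rq n \<Gamma>1 \<tau> c ^^ k) (A*x*B) = A * (rq n \<Gamma>1 \<tau> c ^^ k) x * B"
proof (induction k)
  case 0 then show ?case by simp
next
  case (Suc k)
  then show ?case using rq_comm[OF rq_iter_carrier[OF Suc.prems, of k]] by simp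
qed

lemma low_back_iter: "lowz n ((rp n RR ^^ k) z) \<Longrightarrow> lowz n z"
proof (induction k arbitrary: z)
  case 0 then show ?case by simp
next
  case (Suc k)
  then have "lowz n (rp n RR z)" by (simp add: funpow_Suc_right del: funpow.simps)
  then show ?case by (rule low_back[OF G1 T1])
qed

lemma up_back_iter: "z \<in> carrier_mat n n \<Longrightarrow> upz n ((rq n \<Gamma>1 \<tau> c ^^ k) z) \<Longrightarrow> upz n z"
proof (induction k arbitrary: z)
  case 0 then show ?case by simp
next
  case (Suc k)
  then have "upz n (rq n \<Gamma>1 \<tau> c z)"
    using rq_carrier[OF G1 T1 Suc.prems(1)] by (simp add: funpow_Suc_right del: funpow.simps)
  then show ?case using up_back[OF G1 T1 Suc.prems(1)] unfolding rq_def[OF G1 T1] by blast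
qed

lemma zero_lowz: "lowz n (0\<^sub>m n n)" by (simp add: lowz_def)
lemma zero_upz: "upz n (0\<^sub>m n n)" by (simp add: upz_def)

lemma conj_upper: assumes ab: "a < b" "b < n"
  shows "lowz n (A * eu n a b * B) \<and> dgz n (A * eu n a b * B)"
proof -
  let ?E = "eu n a b"
  let ?y = "A * ?E * B"
  have y: "?y \<in> carrier_mat n n" using A B by (meson mult_carrier_mat eu_carrier)
  have "lowz n ?E" "dgz n ?E" using ab by (auto simp: lowz_def dgz_def eu_index)
  from nil_plus[OF G1 T1 eu_carrier this] obtain N where N: "(rp n RR ^^ N) ?E = 0\<^sub>m n n" by blast
  have "(rp n RR ^^ N) ?y = 0\<^sub>m n n" using iter_comm[OF eu_carrier] N A B by simp
  then have low: "lowz n ?y" using low_back_iter zero_lowz by metis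
  have yy: "?y * ?y = 0\<^sub>m n n" using conj_sq[OF A B BA eu_carrier eu_sq] ab by simp
  have "dgz n ?y" unfolding dgz_def
  proof (intro allI impI)
    fix i assume i: "i < n"
    show "?y $$ (i,i) = 0"
    proof (rule nilp_diag[OF y yy i], intro allI impI)
      fix k assume "k < n" "k \<noteq> i"
      then show "?y $$ (i,k) * ?y $$ (k,i) = 0" using low i by (cases "k < i") (auto simp: lowz_def)
    qed
  qed
  then show ?thesis using low by blast
qed

lemma conj_lower: assumes ab: "b < a" "a < n"
  shows "upz n (A * eu n a b * B) \<and> dgz n (A * eu n a b * B)"
proof -
  let ?E = "eu n a b"
  let ?y = "A * ?E * B"
  have y: "?y \<in> carrier_mat n n" using A B by (meson mult_carrier_mat eu_carrier)
  have "upz n ?E" "dgz n ?E" using ab by (auto simp: upz_def dgz_def eu_index)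
  from nil_minus[OF G1 T1 eu_carrier this] obtain N where N: "(rq n \<Gamma>1 \<tau> c ^^ N) ?E = 0\<^sub>m n n" by blast
  have "(rq n \<Gamma>1 \<tau> c ^^ N) ?y = 0\<^sub>m n n" using rq_iter_comm[OF eu_carrier] N A B by simp
  then have up: "upz n ?y" using up_back_iter[OF y] zero_upz by metis
  have yy: "?y * ?y = 0\<^sub>m n n" using conj_sq[OF A B BA eu_carrier eu_sq] ab by simp
  have "dgz n ?y" unfolding dgz_def
  proof (intro allI impI)
    fix i assume i: "i < n"
    show "?y $$ (i,i) = 0"
    proof (rule nilp_diag[OF y yy i], intro allI impI)
      fix k assume "k < n" "k \<noteq> i"
      then show "?y $$ (i,k) * ?y $$ (k,i) = 0" using up i by (cases "k < i") (auto simp: upz_def)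
    qed
  qed
  then show ?thesis using up by blast
qed


lemma EBV: assumes E: "E \<in> carrier_mat n n" and V: "V \<in> carrier_mat n n"
  shows "E * (B * V) = B * ((A * E * B) * V)"
proof -
  have "B * ((A * E * B) * V) = ((B * A) * E) * (B * V)"
    using A B E V by (simp add: assoc_mult_mat[of _ n n _ n _ n])
  also have "\<dots> = E * (B * V)" using BA E by simp
  finally show ?thesis by simp
qed

lemma mult_zero_entry: assumes "M \<in> carrier_mat n n" "V \<in> carrier_mat n n" "r < n" "q < n"
  "\<And>l. l < n \<Longrightarrow> M $$ (r,l) * V $$ (l,q) = 0" shows "(M * V) $$ (r,q) = 0"
proof -
  have "(M * V) $$ (r,q) = (\<Sum>l<n. M $$ (r,l) * V $$ (l,q))" using assms by (intro mult_entry) auto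
  also have "\<dots> = 0" using assms(5) by (intro sum.neutral) auto
  finally show ?thesis .
qed

lemma B_upper: assumes "i<n" "j<n" "j<i" shows "B $$ (i,j) = 0"
proof -
  have claim: "\<forall>V::kbar mat. V \<in> carrier_mat n n \<longrightarrow> (\<forall>r<n. \<forall>q<n. k \<le> r \<longrightarrow> V $$ (r,q) = 0)
     \<longrightarrow> (\<forall>r<n. \<forall>q<n. k \<le> r \<longrightarrow> (B * V) $$ (r,q) = 0)" for k
  proof (induction k)
    case 0
    show ?case
    proof (intro allI impI)
      fix V :: "kbar mat" and r q assume V: "V \<in> carrier_mat n n" and z: "\<forall>r<n. \<forall>q<n. 0 \<le> r \<longrightarrow> V $$ (r,q) = 0"
        and rq: "r < n" "q < n" "0 \<le> r"
      show "(B * V) $$ (r,q) = 0" using z rq by (intro mult_zero_entry[OF B V]) auto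
    qed
  next
    case (Suc k)
    show ?case
    proof (intro allI impI)
      fix V :: "kbar mat" and r q assume V: "V \<in> carrier_mat n n" and z: "\<forall>r<n. \<forall>q<n. Suc k \<le> r \<longrightarrow> V $$ (r,q) = 0"
        and rq: "r < n" "q < n" "Suc k \<le> r"
      define a where "a = r - 1"
      have a: "a < r" "a < n" "k \<le> a" using rq by (auto simp: a_def)
      let ?M = "A * eu n a r * B"
      have M: "?M \<in> carrier_mat n n" using A B by (meson mult_carrier_mat eu_carrier)
      have Mp: "lowz n ?M" "dgz n ?M" using conj_upper[OF a(1) rq(1)] by auto
      have MV: "?M * V \<in> carrier_mat n n" using M V by simp
      have MVz: "\<forall>r'<n. \<forall>q'<n. k \<le> r' \<longrightarrow> (?M * V) $$ (r',q') = 0"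
      proof (intro allI impI)
        fix r' q' assume h: "r' < n" "q' < n" "k \<le> r'"
        show "(?M * V) $$ (r',q') = 0"
        proof (rule mult_zero_entry[OF M V h(1,2)])
          fix l assume l: "l < n"
          show "?M $$ (r',l) * V $$ (l,q') = 0"
          proof (cases "l \<le> r'")
            case True then show ?thesis using Mp l h by (cases "l = r'") (auto simp: lowz_def dgz_def)
          next
            case False then show ?thesis using z l h by auto
          qed
        qed
      qed
      have "(B * (?M * V)) $$ (a,q) = 0" using Suc.IH MV MVz a rq by blast
      moreover have "(B * V) $$ (r,q) = (eu n a r * (B * V)) $$ (a,q)"
        using eu_left[of a n r q "B * V"] a rq B V by simp
      ultimately show "(B * V) $$ (r,q) = 0" using EBV[OF eu_carrier V] by simp
    qed
  qed
  have "(B * eu n j j) $$ (i,j) = 0"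
    using claim[of "Suc j"] assms by (auto simp: eu_index)
  then show ?thesis using right_unit_entry[OF assms(1,2) B] by simp
qed

lemma B_lower: assumes "i<n" "j<n" "i<j" shows "B $$ (i,j) = 0"
proof -
  have claim: "\<forall>V::kbar mat. V \<in> carrier_mat n n \<longrightarrow> (\<forall>r<n. \<forall>q<n. r + k < n \<longrightarrow> V $$ (r,q) = 0)
     \<longrightarrow> (\<forall>r<n. \<forall>q<n. r + k < n \<longrightarrow> (B * V) $$ (r,q) = 0)" for k
  proof (induction k)
    case 0
    show ?case
    proof (intro allI impI)
      fix V :: "kbar mat" and r q assume V: "V \<in> carrier_mat n n" and z: "\<forall>r<n. \<forall>q<n. r + 0 < n \<longrightarrow> V $$ (r,q) = 0"
        and rq: "r < n" "q < n" "r + 0 < n"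
      show "(B * V) $$ (r,q) = 0" using z rq by (intro mult_zero_entry[OF B V]) auto
    qed
  next
    case (Suc k)
    show ?case
    proof (intro allI impI)
      fix V :: "kbar mat" and r q assume V: "V \<in> carrier_mat n n" and z: "\<forall>r<n. \<forall>q<n. r + Suc k < n \<longrightarrow> V $$ (r,q) = 0"
        and rq: "r < n" "q < n" "r + Suc k < n"
      define a where "a = Suc r"
      have a: "r < a" "a < n" "a + k < n" using rq by (auto simp: a_def)
      let ?M = "A * eu n a r * B"
      have M: "?M \<in> carrier_mat n n" using A B by (meson mult_carrier_mat eu_carrier)
      have Mp: "upz n ?M" "dgz n ?M" using conj_lower[OF a(1) a(2)] by auto
      have MV: "?M * V \<in> carrier_mat n n" using M V by simp
      have MVz: "\<forall>r'<n. \<forall>q'<n. r' + k < n \<longrightarrow> (?M * V) $$ (r',q') = 0"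
      proof (intro allI impI)
        fix r' q' assume h: "r' < n" "q' < n" "r' + k < n"
        show "(?M * V) $$ (r',q') = 0"
        proof (rule mult_zero_entry[OF M V h(1,2)])
          fix l assume l: "l < n"
          show "?M $$ (r',l) * V $$ (l,q') = 0"
          proof (cases "r' \<le> l")
            case True then show ?thesis using Mp l h by (cases "l = r'") (auto simp: upz_def dgz_def)
          next
            case False then show ?thesis using z l h by auto
          qed
        qed
      qed
      have "(B * (?M * V)) $$ (a,q) = 0" using Suc.IH MV MVz a rq by blast
      moreover have "(B * V) $$ (r,q) = (eu n a r * (B * V)) $$ (a,q)"
        using eu_left[of a n r q "B * V"] a rq B V by simp
      ultimately show "(B * V) $$ (r,q) = 0" using EBV[OF eu_carrier V] by simp
    qed
  qed
  have "(B * eu n j j) $$ (i,j) = 0"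
    using claim[of "n - j"] assms by (auto simp: eu_index)
  then show ?thesis using right_unit_entry[OF assms(1,2) B] by simp
qed

lemma A_diag: "diagonal_mat A"
  unfolding diagonal_mat_def
proof (intro allI impI)
  fix i j assume ij: "i < dim_row A" "j < dim_col A" "i \<noteq> j"
  then have ij': "i < n" "j < n" using A by auto
  have Bd: "B $$ (k,j) = 0" if "k < n" "k \<noteq> j" for k
    using B_upper[of k j] B_lower[of k j] that ij' by (cases "k < j") auto
  have Bd2: "B $$ (j,k) = 0" if "k < n" "k \<noteq> j" for k
    using B_upper[of j k] B_lower[of j k] that ij' by (cases "k < j") auto
  have "(A * B) $$ (i,j) = (\<Sum>k<n. A $$ (i,k) * B $$ (k,j))" using A B ij' by (intro mult_entry) auto
  also have "\<dots> = A $$ (i,j) * B $$ (j,j)"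
    using ij' Bd by (subst sum.remove[of _ j]) (auto intro!: sum.neutral)
  finally have 1: "A $$ (i,j) * B $$ (j,j) = 0" using AB ij' ij(3) by simp
  have "(B * A) $$ (j,j) = (\<Sum>k<n. B $$ (j,k) * A $$ (k,j))" using A B ij' by (intro mult_entry) auto
  also have "\<dots> = B $$ (j,j) * A $$ (j,j)"
    using ij' Bd2 by (subst sum.remove[of _ j]) (auto intro!: sum.neutral)
  finally have "B $$ (j,j) * A $$ (j,j) = 1" using BA ij' by simp
  then have "B $$ (j,j) \<noteq> 0" by auto
  then show "A $$ (i,j) = 0" using 1 by simp
qed

end

theorem mainTheorem7:
  fixes n :: nat and \<Gamma>1 \<Gamma>2 :: "nat set" and \<tau> :: "nat \<Rightarrow> nat"
    and c :: "nat \<Rightarrow> nat \<Rightarrow> kbar" and M :: "kbar mat"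
  assumes "admissible n \<Gamma>1 \<Gamma>2 \<tau>"
    and "r0_cond n \<Gamma>1 \<tau> c"
    and "M \<in> centralizer n (rBD n \<Gamma>1 \<tau> c)"
  shows "diagonal_mat M"
proof -
  from assms(3) obtain B where M: "M \<in> carrier_mat n n" and B: "B \<in> carrier_mat n n" "M * B = 1\<^sub>m n"
    "B * M = 1\<^sub>m n" "Ad2 n M B (rBD n \<Gamma>1 \<tau> c) = rBD n \<Gamma>1 \<tau> c"
    by (auto simp: centralizer_def)
  have G1: "\<Gamma>1 \<subseteq> {0..<n-1}" using assms(1) by (simp add: admissible_def)
  have T1: "\<forall>j\<in>\<Gamma>1. \<tau> j < n-1" using assms(1) unfolding admissible_def bij_betw_def by auto
  show ?thesis by (rule A_diag[OF G1 T1 M B(1) B(2) B(3) B(4)])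
qed

end
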